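(* Let $X$ be a finite set, $k$ an integer with $5<k<|X|-5$, $\mathfrak{C}$ a nonempty symmetric family of choice functions for $\binom{X}{k}$, and $\mathcal{F}$ the set of simple averaging functions for $\mathfrak{C}$. (1) If $f_{r;1,2}\in\mathcal{F}$ then $f_{r;\ell,k'}\in\mathcal{F}$ for all $\ell\ne k'$ in $\{1,\dots,r\}$. (2) If $f_{r;1,2}\in\mathcal{F}$ and $r=r(\mathcal{F})\ge 3$, then $f_{r+1;1,2}\in\mathcal{F}$.
   Context: $\binom{X}{k}=\{Y\subseteq X:|Y|=k\}$; choice functions $c$ satisfy $c(Y)\in Y$. Symmetric: closed under $c\mapsto \pi*c$, $(\pi*c)(Y)=\pi^{-1}(c(\pi(Y)))$ for permutations $\pi$ of $X$. $\mathcal{F}_{[r]}$: functions $f:X^r\to X$ with $f(a,\dots,a)=a$ such that for all $c_1,\dots,c_r\in\mathfrak{C}$, $Y\mapsto f(c_1(Y),\dots,c_r(Y))$ is in $\mathfrak{C}$; $\mathcal{F}=\bigcup_r\mathcal{F}_{[r]}$. A monarchy is a projection $f(\bar x)=x_t$. $r(\mathcal{F})=\min\{r:\text{some } f\in\mathcal{F}_{[r]}\text{ is not a monarchy}\}$. For $\ell\ne k'$ in $\{1,\dots,r\}$, $f_{r;\ell,k'}:X^r\to X$ is defined by $f_{r;\ell,k'}(\bar x)=x_\ell$ if $\bar x$ has a repetition and $f_{r;\ell,k'}(\bar x)=x_{k'}$ otherwise. *)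

theory Defs
  imports "HOL-Combinatorics.Permutations"
begin

definition ksubsets :: "'a set \<Rightarrow> nat \<Rightarrow> 'a set set" where
  "ksubsets X k = {Y. Y \<subseteq> X \<and> card Y = k}"

definition choice_fun :: "'a set \<Rightarrow> nat \<Rightarrow> ('a set \<Rightarrow> 'a) \<Rightarrow> bool" where
  "choice_fun X k c \<longleftrightarrow> (\<forall>Y\<in>ksubsets X k. c Y \<in> Y) \<and> c \<in> extensional (ksubsets X k)"

definition perm_act :: "'a set \<Rightarrow> nat \<Rightarrow> ('a \<Rightarrow> 'a) \<Rightarrow> ('a set \<Rightarrow> 'a) \<Rightarrow> ('a set \<Rightarrow> 'a)" where
  "perm_act X k \<pi> c = (\<lambda>Y. if Y \<in> ksubsets X k then inv \<pi> (c (\<pi> ` Y)) else undefined)"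

definition symmetric_family :: "'a set \<Rightarrow> nat \<Rightarrow> ('a set \<Rightarrow> 'a) set \<Rightarrow> bool" where
  "symmetric_family X k C \<longleftrightarrow> (\<forall>c\<in>C. choice_fun X k c) \<and>
     (\<forall>\<pi> c. \<pi> permutes X \<and> c \<in> C \<longrightarrow> perm_act X k \<pi> c \<in> C)"

text \<open>X^r as lists of length r\<close>
definition tuples :: "'a set \<Rightarrow> nat \<Rightarrow> 'a list set" where
  "tuples X r = {xs. length xs = r \<and> set xs \<subseteq> X}"

definition avg_fun :: "'a set \<Rightarrow> nat \<Rightarrow> ('a set \<Rightarrow> 'a) set \<Rightarrow> nat \<Rightarrow> ('a list \<Rightarrow> 'a) \<Rightarrow> bool" where
  "avg_fun X k C r f \<longleftrightarrow> 1 \<le> r \<and>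
     (\<forall>xs\<in>tuples X r. f xs \<in> X) \<and>
     (\<forall>a\<in>X. f (replicate r a) = a) \<and>
     (\<forall>cs. length cs = r \<and> set cs \<subseteq> C \<longrightarrow>
        (\<lambda>Y. if Y \<in> ksubsets X k then f (map (\<lambda>c. c Y) cs) else undefined) \<in> C)"

definition monarchy :: "'a set \<Rightarrow> nat \<Rightarrow> ('a list \<Rightarrow> 'a) \<Rightarrow> bool" where
  "monarchy X r f \<longleftrightarrow> (\<exists>t<r. \<forall>xs\<in>tuples X r. f xs = xs ! t)"

definition rF :: "'a set \<Rightarrow> nat \<Rightarrow> ('a set \<Rightarrow> 'a) set \<Rightarrow> nat" where
  "rF X k C = (LEAST r. 1 \<le> r \<and> (\<exists>f. avg_fun X k C r f \<and> \<not> monarchy X r f))"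

text \<open>f_{r;l,k'} with 1-based indices l, k' (the arity r is the list length)\<close>
definition fsel :: "nat \<Rightarrow> nat \<Rightarrow> 'a list \<Rightarrow> 'a" where
  "fsel l k' xs = (if distinct xs then xs ! (k' - 1) else xs ! (l - 1))"

end

theory Submission
  imports Defs
begin

lemma fsel_mem: "l \<in> {1..length xs} \<Longrightarrow> k' \<in> {1..length xs} \<Longrightarrow> fsel l k' xs \<in> set xs"
  by (auto simp: fsel_def)

lemma fsel_rep: "2 \<le> r \<Longrightarrow> l \<in> {1..r} \<Longrightarrow> fsel l k' (replicate r a) = a"
proof -
  assume r: "2 \<le> r" and l: "l \<in> {1..r}"
  define n where "n = r - 2"
  have "r = Suc (Suc n)" using r unfolding n_def by arith
  then have "\<not> distinct (replicate r a)" by simp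
  then show ?thesis using l by (auto simp: fsel_def)
qed

lemma distinct_perm_map:
  assumes "\<rho> permutes {0..<length ys}"
  shows "distinct (map (\<lambda>i. ys ! \<rho> i) [0..<length ys]) \<longleftrightarrow> distinct ys"
proof -
  let ?A = "{0..<length ys}"
  have bij: "bij_betw \<rho> ?A ?A" using assms by (rule permutes_imp_bij)
  have inj: "inj_on \<rho> ?A" by (rule bij_betw_imp_inj_on[OF bij])
  have im: "\<rho> ` ?A = ?A" by (rule bij_betw_imp_surj_on[OF bij])
  have "distinct ys \<longleftrightarrow> distinct (map (nth ys) [0..<length ys])" by (simp add: map_nth)
  also have "\<dots> \<longleftrightarrow> inj_on (nth ys) ?A" by (simp add: distinct_map)
  also have "\<dots> \<longleftrightarrow> inj_on (nth ys \<circ> \<rho>) ?A" using comp_inj_on_iff[OF inj, of "nth ys"] unfolding im .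
  also have "\<dots> \<longleftrightarrow> distinct (map (\<lambda>i. ys ! \<rho> i) [0..<length ys])"
    by (simp add: distinct_map comp_def)
  finally show ?thesis by simp
qed

lemma exists_perm:
  assumes "a < r" "b < r" "a \<noteq> b" "2 \<le> (r::nat)"
  shows "\<exists>\<rho>. \<rho> permutes {0..<r} \<and> \<rho> 0 = a \<and> \<rho> 1 = b"
proof -
  define c where "c = transpose 0 a b"
  have c0: "c \<noteq> 0" using assms by (auto simp: c_def transpose_def)
  have cr: "c < r" using assms by (auto simp: c_def transpose_def)
  define \<rho> where "\<rho> = transpose 0 a \<circ> transpose 1 c"
  have "\<rho> permutes {0..<r}" unfolding \<rho>_def
    by (rule permutes_compose; rule permutes_swap_id) (use assms cr in auto)
  moreover have "\<rho> 0 = a" using c0 by (simp add: \<rho>_def transpose_def)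
  moreover have "\<rho> 1 = b" by (simp add: \<rho>_def c_def transpose_def)
  ultimately show ?thesis by blast
qed

lemma part1:
  assumes A: "avg_fun X k C r (fsel 1 2)" and r2: "2 \<le> r"
    and l: "l \<in> {1..r}" and k': "k' \<in> {1..r}" and ne: "l \<noteq> k'"
  shows "avg_fun X k C r (fsel l k')"
proof -
  have "l - 1 < r" "k' - 1 < r" "l - 1 \<noteq> k' - 1" using l k' ne by auto
  then have "\<exists>\<rho>. \<rho> permutes {0..<r} \<and> \<rho> 0 = l - 1 \<and> \<rho> 1 = k' - 1"
    using exists_perm r2 by blast
  then obtain \<rho> where p: "\<rho> permutes {0..<r}" and p0: "\<rho> 0 = l - 1" and p1: "\<rho> 1 = k' - 1"
    by blast
  have lt: "\<rho> i < r" if "i < r" for i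
    using permutes_in_image[OF p] that by auto
  have key: "fsel l k' ys = fsel 1 2 (map (\<lambda>i. ys ! \<rho> i) [0..<r])" if "length ys = r" for ys :: "'a list"
  proof -
    have d: "distinct (map (\<lambda>i. ys ! \<rho> i) [0..<r]) \<longleftrightarrow> distinct ys"
      using distinct_perm_map[of \<rho> ys] p that by simp
    show ?thesis using d r2 p0 p1 by (simp add: fsel_def)
  qed
  show ?thesis unfolding avg_fun_def
  proof (intro conjI allI impI ballI)
    show "1 \<le> r" using r2 by simp
  next
    fix xs assume "xs \<in> tuples X r"
    then have len: "length xs = r" and sub: "set xs \<subseteq> X" by (auto simp: tuples_def)
    have "fsel l k' xs \<in> set xs" by (rule fsel_mem) (use l k' len in simp_all)
    then show "fsel l k' xs \<in> X" using sub by blast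
  next
    fix a assume "a \<in> X" show "fsel l k' (replicate r a) = a" by (rule fsel_rep[OF r2 l])
  next
    fix cs :: "('a set \<Rightarrow> 'a) list" assume cs: "length cs = r \<and> set cs \<subseteq> C"
    define cs' where "cs' = map (\<lambda>i. cs ! \<rho> i) [0..<r]"
    have "length cs' = r \<and> set cs' \<subseteq> C" using cs lt by (auto simp: cs'_def)
    then have mem: "(\<lambda>Y. if Y \<in> ksubsets X k then fsel 1 2 (map (\<lambda>c. c Y) cs') else undefined) \<in> C"
      using A unfolding avg_fun_def by blast
    have "(\<lambda>Y. if Y \<in> ksubsets X k then fsel 1 2 (map (\<lambda>c. c Y) cs') else undefined)
        = (\<lambda>Y. if Y \<in> ksubsets X k then fsel l k' (map (\<lambda>c. c Y) cs) else undefined)"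
    proof (rule ext)
      fix Y
      have "map (\<lambda>c. c Y) cs' = map (\<lambda>i. (map (\<lambda>c. c Y) cs) ! \<rho> i) [0..<r]"
        using cs lt by (simp add: cs'_def)
      then show "(if Y \<in> ksubsets X k then fsel 1 2 (map (\<lambda>c. c Y) cs') else undefined)
        = (if Y \<in> ksubsets X k then fsel l k' (map (\<lambda>c. c Y) cs) else undefined)"
        using key[of "map (\<lambda>c. c Y) cs"] cs by simp
    qed
    then show "(\<lambda>Y. if Y \<in> ksubsets X k then fsel l k' (map (\<lambda>c. c Y) cs) else undefined) \<in> C"
      using mem by simp
  qed
qed

lemma fsel_nd: "\<not> distinct xs \<Longrightarrow> fsel l k' xs = xs ! (l - 1)"
  by (simp add: fsel_def)

lemma fsel_d: "distinct xs \<Longrightarrow> fsel l k' xs = xs ! (k' - 1)"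
  by (simp add: fsel_def)

lemma comb_core:
  "fsel 1 2 (a#b#ws@[y,z]) = fsel 1 2 (a # fsel 1 2 (a#b#ws@[y]) # fsel 2 1 (z#a#ws@[y]) # ws)"
proof (cases "distinct (a#b#ws@[y])")
  case False
  have A: "fsel 1 2 (a#b#ws@[y]) = a" by (subst fsel_nd[OF False]) simp
  have L: "\<not> distinct (a#b#ws@[y,z])" using False by auto
  have R: "fsel 1 2 (a # a # fsel 2 1 (z#a#ws@[y]) # ws) = a" by (subst fsel_nd) simp_all
  have L2: "fsel 1 2 (a#b#ws@[y,z]) = a" by (subst fsel_nd[OF L]) simp
  show ?thesis using A R L2 by simp
next
  case T1: True
  have A: "fsel 1 2 (a#b#ws@[y]) = b" by (subst fsel_d[OF T1]) simp
  show ?thesis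
  proof (cases "distinct (z#a#ws@[y])")
    case False
    have B: "fsel 2 1 (z#a#ws@[y]) = a" by (subst fsel_nd[OF False]) simp
    have L: "\<not> distinct (a#b#ws@[y,z])" using False T1 by auto
    have R: "fsel 1 2 (a # b # a # ws) = a" by (subst fsel_nd) simp_all
    have L2: "fsel 1 2 (a#b#ws@[y,z]) = a" by (subst fsel_nd[OF L]) simp
    show ?thesis unfolding A B using R L2 by simp
  next
    case True
    have B: "fsel 2 1 (z#a#ws@[y]) = z" by (subst fsel_d[OF True]) simp
    have D: "distinct (a#b#ws@[y,z]) \<longleftrightarrow> distinct (a#b#z#ws)" using True T1 by auto
    have R: "fsel 1 2 (a # b # z # ws) = fsel 1 2 (a#b#ws@[y,z])"
    proof (cases "distinct (a#b#ws@[y,z])")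
      case True
      then have T2: "distinct (a#b#z#ws)" using D by blast
      show ?thesis by (simp add: fsel_d[OF T2] fsel_d[OF True])
    next
      case False
      then have F2: "\<not> distinct (a#b#z#ws)" using D by blast
      show ?thesis by (simp add: fsel_nd[OF F2] fsel_nd[OF False])
    qed
    show ?thesis unfolding A B using R by simp
  qed
qed

lemma comb_identity:
  assumes "length xs = r + 1" "3 \<le> r"
  shows "fsel 1 2 xs = fsel 1 2 (xs!0 # fsel 1 2 (take r xs)
          # fsel 2 1 (xs!r # xs!0 # take (r-2) (drop 2 xs)) # take (r-3) (drop 2 xs))"
proof -
  obtain a b zs where xs: "xs = a # b # zs"
    using assms by (cases xs; cases "tl xs") auto
  have lz: "length zs = r - 1" using assms xs by simp
  obtain zs' z where zs1: "zs = zs' @ [z]" using lz assms by (cases zs rule: rev_cases) auto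
  obtain ws y where zs2: "zs' = ws @ [y]" using lz assms zs1 by (cases zs' rule: rev_cases) auto
  define m where "m = r - 3"
  have rm: "r = Suc (Suc (Suc m))" using assms(2) unfolding m_def by arith
  have lw: "length ws = m" using lz zs1 zs2 rm by simp
  have e1: "take r xs = a # b # ws @ [y]" using xs zs1 zs2 lw rm by simp
  have e2: "xs ! r = z" using xs zs1 zs2 lw rm by (simp add: nth_append)
  have e3: "take (r-2) (drop 2 xs) = ws @ [y]" using xs zs1 zs2 lw rm by simp
  have e4: "take (r-3) (drop 2 xs) = ws" using xs zs1 zs2 lw rm by simp
  have e0: "xs ! 0 = a" using xs by simp
  have e5: "xs = a#b#ws@[y,z]" using xs zs1 zs2 by simp
  show ?thesis unfolding e0 e1 e2 e3 e4 by (subst e5) (rule comb_core)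
qed

lemma part2:
  assumes A: "avg_fun X k C r (fsel 1 2)" and r3: "3 \<le> r"
  shows "avg_fun X k C (r + 1) (fsel 1 2)"
proof -
  have B: "avg_fun X k C r (fsel 2 1)" using part1[OF A, of 2 1] r3 by simp
  have clA: "\<And>cs. length cs = r \<and> set cs \<subseteq> C \<Longrightarrow>
     (\<lambda>Y. if Y \<in> ksubsets X k then fsel 1 2 (map (\<lambda>c. c Y) cs) else undefined) \<in> C"
    using A unfolding avg_fun_def by blast
  have clB: "\<And>cs. length cs = r \<and> set cs \<subseteq> C \<Longrightarrow>
     (\<lambda>Y. if Y \<in> ksubsets X k then fsel 2 1 (map (\<lambda>c. c Y) cs) else undefined) \<in> C"
    using B unfolding avg_fun_def by blast
  show ?thesis unfolding avg_fun_def
  proof (intro conjI allI impI ballI)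
    show "1 \<le> r + 1" by simp
  next
    fix xs assume "xs \<in> tuples X (r + 1)"
    then have len: "length xs = r + 1" and sub: "set xs \<subseteq> X" by (auto simp: tuples_def)
    have "fsel 1 2 xs \<in> set xs" by (rule fsel_mem) (use r3 len in simp_all)
    then show "fsel 1 2 xs \<in> X" using sub by blast
  next
    fix a assume "a \<in> X" then show "fsel 1 2 (replicate (r + 1) a) = a" using fsel_rep[of "r+1" 1] r3 by simp
  next
    fix cs :: "('a set \<Rightarrow> 'a) list" assume cs: "length cs = r + 1 \<and> set cs \<subseteq> C"
    define cA where "cA = (\<lambda>Y. if Y \<in> ksubsets X k then fsel 1 2 (map (\<lambda>c. c Y) (take r cs)) else undefined)"
    have cA: "cA \<in> C" unfolding cA_def
      by (rule clA) (use cs set_take_subset[of r cs] in auto)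
    define lB where "lB = cs!r # cs!0 # take (r-2) (drop 2 cs)"
    have "set (take (r-2) (drop 2 cs)) \<subseteq> set cs"
      by (meson order_trans set_drop_subset set_take_subset)
    moreover have "cs!r \<in> set cs" "cs!0 \<in> set cs" using cs by auto
    ultimately have "length lB = r \<and> set lB \<subseteq> C" using cs r3 by (auto simp: lB_def)
    then have cB: "(\<lambda>Y. if Y \<in> ksubsets X k then fsel 2 1 (map (\<lambda>c. c Y) lB) else undefined) \<in> C"
      by (rule clB)
    define cB where "cB = (\<lambda>Y. if Y \<in> ksubsets X k then fsel 2 1 (map (\<lambda>c. c Y) lB) else undefined)"
    define lF where "lF = cs!0 # cA # cB # take (r-3) (drop 2 cs)"
    have "set (take (r-3) (drop 2 cs)) \<subseteq> set cs"
      by (meson order_trans set_drop_subset set_take_subset)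
    then have "length lF = r \<and> set lF \<subseteq> C" using cs r3 cA cB \<open>cs!0 \<in> set cs\<close>
      by (auto simp: lF_def cB_def)
    then have mem: "(\<lambda>Y. if Y \<in> ksubsets X k then fsel 1 2 (map (\<lambda>c. c Y) lF) else undefined) \<in> C"
      by (rule clA)
    have "(\<lambda>Y. if Y \<in> ksubsets X k then fsel 1 2 (map (\<lambda>c. c Y) lF) else undefined)
       = (\<lambda>Y. if Y \<in> ksubsets X k then fsel 1 2 (map (\<lambda>c. c Y) cs) else undefined)"
    proof (rule ext)
      fix Y
      show "(if Y \<in> ksubsets X k then fsel 1 2 (map (\<lambda>c. c Y) lF) else undefined)
         = (if Y \<in> ksubsets X k then fsel 1 2 (map (\<lambda>c. c Y) cs) else undefined)"
      proof (cases "Y \<in> ksubsets X k")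
        case True
        let ?xs = "map (\<lambda>c. c Y) cs"
        have id: "fsel 1 2 ?xs = fsel 1 2 (?xs!0 # fsel 1 2 (take r ?xs)
          # fsel 2 1 (?xs!r # ?xs!0 # take (r-2) (drop 2 ?xs)) # take (r-3) (drop 2 ?xs))"
          by (rule comb_identity) (use cs r3 in auto)
        have m: "map (\<lambda>c. c Y) lF = ?xs!0 # fsel 1 2 (take r ?xs)
          # fsel 2 1 (?xs!r # ?xs!0 # take (r-2) (drop 2 ?xs)) # take (r-3) (drop 2 ?xs)"
          using cs True by (simp add: lF_def cA_def cB_def lB_def take_map drop_map)
        show ?thesis using True id m by simp
      qed simp
    qed
    then show "(\<lambda>Y. if Y \<in> ksubsets X k then fsel 1 2 (map (\<lambda>c. c Y) cs) else undefined) \<in> C"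
      using mem by simp
  qed
qed

theorem claim2p7:
  fixes X :: "'a set" and k :: nat and C :: "('a set \<Rightarrow> 'a) set"
  assumes "finite X" and "5 < k" and "k + 5 < card X"
    and "C \<noteq> {}" and "symmetric_family X k C"
  shows "(\<forall>r. 2 \<le> r \<and> avg_fun X k C r (fsel 1 2) \<longrightarrow>
            (\<forall>l k'. l \<in> {1..r} \<and> k' \<in> {1..r} \<and> l \<noteq> k' \<longrightarrow> avg_fun X k C r (fsel l k')))
       \<and> (\<forall>r. 2 \<le> r \<and> avg_fun X k C r (fsel 1 2) \<and> r = rF X k C \<and> 3 \<le> r \<longrightarrow>
            avg_fun X k C (r + 1) (fsel 1 2))"
proof (intro conjI allI impI)
  fix r l k' assume h: "2 \<le> r \<and> avg_fun X k C r (fsel 1 2)"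
    and h2: "l \<in> {1..r} \<and> k' \<in> {1..r} \<and> l \<noteq> k'"
  show "avg_fun X k C r (fsel l k')"
    using part1[of X k C r l k'] h h2 by blast
next
  fix r assume h: "2 \<le> r \<and> avg_fun X k C r (fsel 1 2) \<and> r = rF X k C \<and> 3 \<le> r"
  show "avg_fun X k C (r + 1) (fsel 1 2)"
    using part2[of X k C r] h by blast
qed

end
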